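(* For $m\ge2$ let $\beta(m)=\inf\{t>0:Z_{m-1}(t)\ge\frac{1}{2e}\}$ for the frozen boundaries process $\mathbf{Z}_m$. There exists $c\in(0,\infty)$ such that for all $m>1$, $\mathbb{E}^*\beta(m)\le cm^2$.
   Context: Frozen boundaries process: for $m\ge2$, $\mathbf{Z}_m=(Z_1,\dots,Z_m)$ is an $m$-particle pure jump Markov process on $\mathbb{R}$ with $Z_1(t)=1$ and $Z_m(t)=0$ for all $t\ge0$, $Z_i(0)=0$ for $i\in\{2,\dots,m\}$, and $Z_1(t)\ge Z_2(t)\ge\dots\ge Z_m(t)$. For each $i\in\{2,\dots,m-1\}$, particle $Z_i$ jumps at rate $Z_{i-1}(t)-Z_i(t)$ to a location chosen uniformly in $(Z_i(t),Z_{i-1}(t))$ (so it cannot move while $Z_i=Z_{i-1}$). $\mathbb{P}^*,\mathbb{E}^*$ denote its law and expectation. *)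

theory Defs
  imports "HOL-Probability.Probability"
begin

text \<open>Frozen boundaries process Z_m, constructed pathwise (standard Gillespie /
 superposition construction) from an i.i.d. sequence of pairs (U_k, E_k),
 U_k uniform on (0,1), E_k exponential with rate 1, all independent.
 Configurations are functions nat => real; only indices 1..m are meaningful.\<close>

definition fb_init :: "nat \<Rightarrow> nat \<Rightarrow> real" where
  "fb_init m i = (if i = 1 then 1 else 0)"

definition fb_rate :: "nat \<Rightarrow> (nat \<Rightarrow> real) \<Rightarrow> real" where
  "fb_rate m z = (\<Sum>i\<in>{2..m-1}. z (i - 1) - z i)"

text \<open>One jump driven by U in (0,1): the point u is uniform on (z(m-1), z(1)), which is the
 disjoint union of the intervals (z i, z(i-1)), i = 2..m-1; choosing u this way selects
 particle i with probability proportional to its rate z(i-1) - z(i), and moves it to a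
 uniform location in (z i, z(i-1)).\<close>
definition fb_jump :: "nat \<Rightarrow> (nat \<Rightarrow> real) \<Rightarrow> real \<Rightarrow> nat \<Rightarrow> real" where
  "fb_jump m z U = (let u = z (m - 1) + U * fb_rate m z in
     (\<lambda>i. if 2 \<le> i \<and> i \<le> m - 1 \<and> z i < u \<and> u < z (i - 1) then u else z i))"

fun fb_chain :: "nat \<Rightarrow> (nat \<Rightarrow> real \<times> real) \<Rightarrow> nat \<Rightarrow> nat \<Rightarrow> real" where
  "fb_chain m \<omega> 0 = fb_init m"
| "fb_chain m \<omega> (Suc k) = fb_jump m (fb_chain m \<omega> k) (fst (\<omega> k))"

text \<open>Holding time in the k-th state: Exp(rate) = E_k / rate (infinite if rate is 0).\<close>
definition fb_hold :: "nat \<Rightarrow> (nat \<Rightarrow> real \<times> real) \<Rightarrow> nat \<Rightarrow> ennreal" where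
  "fb_hold m \<omega> k = (let r = fb_rate m (fb_chain m \<omega> k) in
     if 0 < r then ennreal (snd (\<omega> k) / r) else \<infinity>)"

definition fb_jumptime :: "nat \<Rightarrow> (nat \<Rightarrow> real \<times> real) \<Rightarrow> nat \<Rightarrow> ennreal" where
  "fb_jumptime m \<omega> k = (\<Sum>j<k. fb_hold m \<omega> j)"

definition fb_Z :: "nat \<Rightarrow> (nat \<Rightarrow> real \<times> real) \<Rightarrow> real \<Rightarrow> nat \<Rightarrow> real" where
  "fb_Z m \<omega> t = fb_chain m \<omega> (card {k. 1 \<le> k \<and> fb_jumptime m \<omega> k \<le> ennreal t})"

definition fb_space :: "(nat \<Rightarrow> real \<times> real) measure" where
  "fb_space = PiM UNIV (\<lambda>_::nat.
      uniform_measure lborel {0<..<(1::real)} \<Otimes>\<^sub>M density lborel (exponential_density 1))"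

text \<open>beta(m) = inf{t > 0 : Z_{m-1}(t) >= 1/(2e)} (value infinity if the set is empty).\<close>
definition fb_beta :: "nat \<Rightarrow> (nat \<Rightarrow> real \<times> real) \<Rightarrow> ennreal" where
  "fb_beta m \<omega> = Inf {ennreal t | t. 0 < t \<and> 1 / (2 * exp 1) \<le> fb_Z m \<omega> t (m - 1)}"

end

theory Submission
  imports Defs
begin


definition a0 :: real where "a0 = 1 / (2 * exp 1)"

definition M0 :: "(real \<times> real) measure" where
  "M0 = uniform_measure lborel {0<..<(1::real)} \<Otimes>\<^sub>M density lborel (exponential_density 1)"

lemma fb_space_M0: "fb_space = PiM UNIV (\<lambda>_. M0)"
  unfolding fb_space_def M0_def ..

lemma prob_unif: "prob_space (uniform_measure lborel {0<..<(1::real)})"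
  by (intro prob_space_uniform_measure) auto

lemma prob_M0: "prob_space M0"
  unfolding M0_def
  by (intro prob_space_pair prob_unif prob_space_exponential_density) simp

fun gchain :: "nat \<Rightarrow> (nat \<Rightarrow> real) \<Rightarrow> (nat \<Rightarrow> real \<times> real) \<Rightarrow> nat \<Rightarrow> nat \<Rightarrow> real" where
  "gchain m z \<omega> 0 = z"
| "gchain m z \<omega> (Suc k) = fb_jump m (gchain m z \<omega> k) (fst (\<omega> k))"

lemma fb_chain_gchain: "fb_chain m \<omega> k = gchain m (fb_init m) \<omega> k"
  by (induct k) auto

lemma gchain_shift: "gchain m z \<omega> (Suc k) = gchain m (fb_jump m z (fst (\<omega> 0))) (\<lambda>n. \<omega> (Suc n)) k"
  by (induct k) auto

lemma meas_gchain: "(\<lambda>\<omega>. gchain m z \<omega> k i) \<in> borel_measurable (PiM UNIV (\<lambda>_. M0))"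
proof (induct k arbitrary: i)
  case 0 then show ?case by simp
next
  case (Suc k)
  note [measurable] = Suc
  have [measurable]: "(\<lambda>\<omega>. fst (\<omega> k)) \<in> borel_measurable (PiM UNIV (\<lambda>_. M0))"
    unfolding M0_def by measurable
  show ?case
    unfolding gchain.simps fb_jump_def Let_def fb_rate_def by measurable
qed



definition Inv :: "nat \<Rightarrow> (nat \<Rightarrow> real) \<Rightarrow> bool" where
  "Inv m z \<longleftrightarrow> z 1 = 1 \<and> (\<forall>i. 2 \<le> i \<and> i \<le> m - 1 \<longrightarrow> z i \<le> z (i - 1)) \<and> 0 \<le> z (m - 1)"

definition Ssum :: "nat \<Rightarrow> (nat \<Rightarrow> real) \<Rightarrow> real" where
  "Ssum m z = (\<Sum>i\<in>{2..m-1}. z i)"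

lemma rate_tele: "2 \<le> m \<Longrightarrow> fb_rate m z = z 1 - z (m - 1)"
proof (induct m rule: dec_induct)
  case base then show ?case by (simp add: fb_rate_def)
next
  case (step n)
  have "{2..Suc n - 1} = insert n {2..n-1}" using step by auto
  then show ?case using step by (simp add: fb_rate_def)
qed

lemma Inv_ord: assumes I: "Inv m z" and i1: "1 \<le> i" and ij: "i \<le> j" and jm: "j \<le> m - 1"
  shows "z j \<le> z i"
proof -
  have "n \<le> m - 1 \<longrightarrow> z n \<le> z i" if "i \<le> n" for n
    using that
  proof (induct n rule: dec_induct)
    case base then show ?case by simp
  next
    case (step n)
    have "Suc n \<le> m - 1 \<longrightarrow> z (Suc n) \<le> z n"
    proof
      assume "Suc n \<le> m - 1"
      moreover have "2 \<le> Suc n" using step(1) i1 by simp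
      ultimately show "z (Suc n) \<le> z n" using I unfolding Inv_def by (metis diff_Suc_1)
    qed
    then show ?case using step by auto
  qed
  then show ?thesis using ij jm by blast
qed

lemma jump_ge: "z i \<le> fb_jump m z U i"
  by (auto simp: fb_jump_def Let_def)

lemma jump_Inv: "Inv m z \<Longrightarrow> Inv m (fb_jump m z U)"
proof -
  assume I: "Inv m z"
  have 1: "fb_jump m z U 1 = 1" using I by (simp add: fb_jump_def Let_def Inv_def)
  have 2: "fb_jump m z U i \<le> fb_jump m z U (i - 1)" if "2 \<le> i" "i \<le> m - 1" for i
  proof -
    have "z i \<le> z (i - 1)" using I that by (simp add: Inv_def)
    moreover have "z (i - 1) \<le> fb_jump m z U (i - 1)" by (rule jump_ge)
    ultimately show ?thesis by (auto simp: fb_jump_def Let_def)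
  qed
  have 3: "0 \<le> fb_jump m z U (m - 1)" using I jump_ge[of z "m - 1" m U] by (simp add: Inv_def)
  show ?thesis using 1 2 3 by (simp add: Inv_def)
qed

lemma Ssum_bounds: "2 \<le> m \<Longrightarrow> Inv m z \<Longrightarrow> 0 \<le> Ssum m z \<and> Ssum m z \<le> real m - 2"
proof -
  assume m2: "2 \<le> m" and I: "Inv m z"
  have a: "0 \<le> z i \<and> z i \<le> 1" if "i \<in> {2..m-1}" for i
    using Inv_ord[OF I, of i "m - 1"] Inv_ord[OF I, of 1 i] that I by (auto simp: Inv_def)
  have "0 \<le> Ssum m z" unfolding Ssum_def by (intro sum_nonneg) (use a in auto)
  moreover have "Ssum m z \<le> (\<Sum>i\<in>{2..m-1}. 1)" unfolding Ssum_def by (intro sum_mono) (use a in auto)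
  moreover have "(\<Sum>i\<in>{2..m-1}. (1::real)) \<le> real m - 2" using m2 by auto
  ultimately show ?thesis by linarith
qed



abbreviation Unif :: "real measure" where "Unif \<equiv> uniform_measure lborel {0<..<(1::real)}"

lemma a0_bounds: "0 < a0" "a0 < 1/2"
proof -
  have "1 < exp (1::real)" by simp
  then show "0 < a0" "a0 < 1/2" unfolding a0_def by (auto simp: field_simps)
qed

lemma emeasure_Unif_interval:
  assumes "0 \<le> p" "p \<le> q" "q \<le> 1"
  shows "emeasure Unif {p<..<q} = ennreal (q - p)"
proof -
  have "{0<..<1} \<inter> {p<..<q} = {p<..<(q::real)}" using assms by auto
  then have "emeasure Unif {p<..<q} = ennreal (q - p) / ennreal 1" using assms by simp
  also have "\<dots> = ennreal (q - p)" using assms by (subst divide_ennreal) auto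
  finally show ?thesis .
qed

lemma key:
  assumes m2: "2 \<le> m" and I: "Inv m z" and al: "z (m - 1) < a0"
  shows "ennreal (Ssum m z + 1 / (8 * (real m - 2))) \<le> (\<integral>\<^sup>+U. ennreal (Ssum m (fb_jump m z U)) \<partial>Unif)"
proof -
  have z1: "z 1 = 1" using I by (simp add: Inv_def)
  have zm: "0 \<le> z (m - 1)" using I by (simp add: Inv_def)
  have m3: "3 \<le> m"
  proof (rule ccontr)
    assume "\<not> 3 \<le> m"
    then have "m - 1 = 1" using m2 by simp
    then show False using al z1 a0_bounds by simp
  qed
  define L where "L = 1 - z (m - 1)"
  have L: "1/2 < L" "L \<le> 1" using al a0_bounds zm unfolding L_def by auto
  define A where "A = {2..m-1}"
  define g where "g i = z (i - 1) - z i" for i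
  have rate: "fb_rate m z = L" using rate_tele[OF m2] z1 L_def by simp
  have gsum: "(\<Sum>i\<in>A. g i) = L" using rate unfolding fb_rate_def A_def g_def .
  have gnn: "0 \<le> g i" if "i \<in> A" for i using I that unfolding A_def g_def Inv_def by auto
  have cardA: "card A = m - 2" unfolding A_def by simp
  define p where "p i = (z i + g i / 2 - z (m - 1)) / L" for i
  define q where "q i = (z (i - 1) - z (m - 1)) / L" for i
  have pq: "0 \<le> p i \<and> p i \<le> q i \<and> q i \<le> 1 \<and> q i - p i = g i / (2 * L)" if iA: "i \<in> A" for i
  proof -
    have i: "2 \<le> i" "i \<le> m - 1" using iA unfolding A_def by auto
    have "z (m - 1) \<le> z i" using Inv_ord[OF I, of i "m - 1"] i by simp
    moreover have "z (i - 1) \<le> z 1" using Inv_ord[OF I, of 1 "i - 1"] i by simp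
    moreover have "0 \<le> g i" using gnn iA .
    moreover have Lp: "0 < L" using L by simp
    ultimately have n1: "0 \<le> z i + g i / 2 - z (m - 1)" and n2: "z i + g i / 2 - z (m - 1) \<le> z (i - 1) - z (m - 1)"
      and n3: "z (i - 1) - z (m - 1) \<le> L" and n4: "(z (i - 1) - z (m - 1)) - (z i + g i / 2 - z (m - 1)) = g i / 2"
      using z1 unfolding g_def L_def by (auto simp: field_simps)
    have "0 \<le> p i" unfolding p_def using n1 Lp by simp
    moreover have "p i \<le> q i" unfolding p_def q_def using n2 Lp by (simp add: divide_right_mono)
    moreover have "q i \<le> 1" unfolding q_def using n3 Lp by simp
    moreover have "q i - p i = g i / (2 * L)" unfolding p_def q_def
      by (simp only: diff_divide_distrib[symmetric] n4)
    ultimately show ?thesis by blast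
  qed
  define f where "f U = Ssum m z + (\<Sum>i\<in>A. (g i / 2) * indicator {p i<..<q i} U)" for U :: real
  have pw: "f U \<le> Ssum m (fb_jump m z U)" for U
  proof -
    have "(g i / 2) * indicator {p i<..<q i} U \<le> fb_jump m z U i - z i" if iA: "i \<in> A" for i
    proof (cases "U \<in> {p i<..<q i}")
      case True
      define u where "u = z (m - 1) + U * fb_rate m z"
      have "u = z (m - 1) + U * L" using rate u_def by simp
      then have "z i + g i / 2 < u" "u < z (i - 1)"
        using True L unfolding p_def q_def by (auto simp: field_simps)
      moreover have "0 \<le> g i" using gnn iA .
      moreover have i: "2 \<le> i" "i \<le> m - 1" using iA unfolding A_def by auto
      ultimately have "fb_jump m z U i = u" unfolding fb_jump_def Let_def u_def[symmetric] by auto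
      then show ?thesis using True \<open>z i + g i / 2 < u\<close> by simp
    next
      case False
      then show ?thesis using jump_ge[of z i m U] by simp
    qed
    then have "(\<Sum>i\<in>A. (g i / 2) * indicator {p i<..<q i} U) \<le> (\<Sum>i\<in>A. fb_jump m z U i - z i)"
      by (rule sum_mono)
    then show ?thesis unfolding f_def Ssum_def A_def by (simp add: sum_subtractf)
  qed
  have "(\<integral>\<^sup>+U. ennreal (f U) \<partial>Unif) = (\<integral>\<^sup>+U. ennreal (Ssum m z) + (\<Sum>i\<in>A. ennreal (g i / 2) * indicator {p i<..<q i} U) \<partial>Unif)"
  proof (intro nn_integral_cong)
    fix U
    have "ennreal (f U) = ennreal (Ssum m z) + ennreal (\<Sum>i\<in>A. (g i / 2) * indicator {p i<..<q i} U)"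
      unfolding f_def using Ssum_bounds[OF m2 I] gnn
      by (intro ennreal_plus) (auto intro!: sum_nonneg)
    also have "ennreal (\<Sum>i\<in>A. (g i / 2) * indicator {p i<..<q i} U) = (\<Sum>i\<in>A. ennreal ((g i / 2) * indicator {p i<..<q i} U))"
      using gnn by (subst sum_ennreal) auto
    also have "\<dots> = (\<Sum>i\<in>A. ennreal (g i / 2) * indicator {p i<..<q i} U)"
      by (intro sum.cong refl) (auto simp: indicator_def)
    finally show "ennreal (f U) = ennreal (Ssum m z) + (\<Sum>i\<in>A. ennreal (g i / 2) * indicator {p i<..<q i} U)" .
  qed
  also have "\<dots> = ennreal (Ssum m z) + (\<Sum>i\<in>A. ennreal (g i / 2) * emeasure Unif {p i<..<q i})"
    by (subst nn_integral_add) (auto simp: nn_integral_sum nn_integral_cmult_indicator prob_space.emeasure_space_1[OF prob_unif])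
  also have "\<dots> = ennreal (Ssum m z) + (\<Sum>i\<in>A. ennreal (g i / 2 * (g i / (2 * L))))"
  proof (intro arg_cong2[where f="(+)"] sum.cong refl)
    fix i assume iA: "i \<in> A"
    have em: "emeasure Unif {p i<..<q i} = ennreal (g i / (2 * L))"
      using pq[OF iA] emeasure_Unif_interval[of "p i" "q i"] by presburger
    have e: "ennreal (g i / 2) * ennreal (g i / (2 * L)) = ennreal (g i / 2 * (g i / (2 * L)))"
      using gnn[OF iA] L by (intro ennreal_mult[symmetric]) auto
    show "ennreal (g i / 2) * emeasure Unif {p i<..<q i} = ennreal (g i / 2 * (g i / (2 * L)))"
      unfolding em e ..
  qed
  also have "\<dots> = ennreal (Ssum m z + (\<Sum>i\<in>A. g i / 2 * (g i / (2 * L))))"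
    using gnn L Ssum_bounds[OF m2 I]
    by (subst sum_ennreal) (auto intro!: ennreal_plus[symmetric] sum_nonneg)
  finally have eq: "(\<integral>\<^sup>+U. ennreal (f U) \<partial>Unif) = ennreal (Ssum m z + (\<Sum>i\<in>A. g i / 2 * (g i / (2 * L))))" .
  have "L\<^sup>2 \<le> (\<Sum>i\<in>A. (g i)\<^sup>2) * (real m - 2)"
    using sum_squared_le_sum_of_squares[of g A] gsum cardA m3 by (simp add: of_nat_diff)
  then have "L / (4 * (real m - 2)) \<le> (\<Sum>i\<in>A. (g i)\<^sup>2) / (4 * L)"
    using L m3 by (simp add: field_simps power2_eq_square)
  moreover have "(\<Sum>i\<in>A. g i / 2 * (g i / (2 * L))) = (\<Sum>i\<in>A. (g i)\<^sup>2) / (4 * L)"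
    by (simp add: sum_divide_distrib power2_eq_square field_simps)
  moreover have "1 / (8 * (real m - 2)) \<le> L / (4 * (real m - 2))"
  proof -
    have "1 / (8 * (real m - 2)) \<le> (2 * L) / (8 * (real m - 2))"
      using L m3 by (intro divide_right_mono) auto
    also have "\<dots> = L / (4 * (real m - 2))" using m3 by (simp add: field_simps)
    finally show ?thesis .
  qed
  ultimately have "Ssum m z + 1 / (8 * (real m - 2)) \<le> Ssum m z + (\<Sum>i\<in>A. g i / 2 * (g i / (2 * L)))"
    by linarith
  then have "ennreal (Ssum m z + 1 / (8 * (real m - 2))) \<le> (\<integral>\<^sup>+U. ennreal (f U) \<partial>Unif)"
    unfolding eq by (rule ennreal_leI)
  also have "\<dots> \<le> (\<integral>\<^sup>+U. ennreal (Ssum m (fb_jump m z U)) \<partial>Unif)"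
    by (intro nn_integral_mono ennreal_leI pw)
  finally show ?thesis .
qed



abbreviation PP :: "(nat \<Rightarrow> real \<times> real) measure" where "PP \<equiv> PiM UNIV (\<lambda>_. M0)"

definition galive :: "nat \<Rightarrow> (nat \<Rightarrow> real) \<Rightarrow> (nat \<Rightarrow> real \<times> real) \<Rightarrow> nat \<Rightarrow> bool" where
  "galive m z \<omega> j \<longleftrightarrow> (\<forall>i\<le>j. gchain m z \<omega> i (m - 1) < a0)"

definition hterm :: "nat \<Rightarrow> (nat \<Rightarrow> real) \<Rightarrow> (nat \<Rightarrow> real \<times> real) \<Rightarrow> nat \<Rightarrow> ennreal" where
  "hterm m z \<omega> j = (if galive m z \<omega> j then ennreal (1 + snd (\<omega> j)) else 0)"

definition HS :: "nat \<Rightarrow> (nat \<Rightarrow> real) \<Rightarrow> nat \<Rightarrow> (nat \<Rightarrow> real \<times> real) \<Rightarrow> ennreal" where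
  "HS m z n \<omega> = (\<Sum>j<n. hterm m z \<omega> j)"

lemma meas_hterm[measurable]: "(\<lambda>\<omega>. hterm m z \<omega> j) \<in> borel_measurable PP"
proof -
  have [measurable]: "\<And>i k. (\<lambda>\<omega>. gchain m z \<omega> i k) \<in> borel_measurable PP" by (rule meas_gchain)
  have [measurable]: "(\<lambda>\<omega>. snd (\<omega> j)) \<in> borel_measurable PP"
    unfolding M0_def by measurable
  show ?thesis unfolding hterm_def galive_def by measurable
qed

lemma galive_0: "galive m z \<omega> 0 \<longleftrightarrow> z (m - 1) < a0"
  by (simp add: galive_def)

lemma all_le_Suc: "(\<forall>i\<le>Suc j. Q i) \<longleftrightarrow> Q 0 \<and> (\<forall>i\<le>j. Q (Suc i))"
  apply auto
  apply (case_tac i)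
   apply auto
  done

lemma galive_Suc: "galive m z \<omega> (Suc j) \<longleftrightarrow>
   z (m - 1) < a0 \<and> galive m (fb_jump m z (fst (\<omega> 0))) (\<lambda>n. \<omega> (Suc n)) j"
  unfolding galive_def by (auto simp: gchain_shift all_le_Suc simp del: gchain.simps(2))

lemma hterm_Suc: "hterm m z (case_nat s \<omega>) (Suc j) =
   (if z (m - 1) < a0 then hterm m (fb_jump m z (fst s)) \<omega> j else 0)"
  unfolding hterm_def galive_Suc by simp

lemma HS_rec: "HS m z (Suc n) (case_nat s \<omega>) =
   (if z (m - 1) < a0 then ennreal (1 + snd s) + HS m (fb_jump m z (fst s)) n \<omega> else 0)"
  unfolding HS_def sum.lessThan_Suc_shift hterm_Suc
  by (simp add: hterm_def galive_0)



lemma prob_PP: "prob_space PP"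
  by (intro prob_space_PiM prob_M0)

lemma PP_iter:
  assumes f[measurable]: "f \<in> borel_measurable PP"
  shows "(\<integral>\<^sup>+\<omega>. f \<omega> \<partial>PP) = (\<integral>\<^sup>+s. (\<integral>\<^sup>+\<omega>. f (case_nat s \<omega>) \<partial>PP) \<partial>M0)"
proof -
  interpret M0: prob_space M0 by (rule prob_M0)
  interpret Q: sequence_space M0 by unfold_locales

  have mm: "(\<lambda>(s, \<omega>). case_nat s \<omega>) \<in> measurable (M0 \<Otimes>\<^sub>M PP) PP" by measurable
  have "(\<integral>\<^sup>+\<omega>. f \<omega> \<partial>PP) = (\<integral>\<^sup>+\<omega>. f \<omega> \<partial>distr (M0 \<Otimes>\<^sub>M PP) PP (\<lambda>(s, \<omega>). case_nat s \<omega>))"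
    using Q.PiM_iter by simp
  also have "\<dots> = (\<integral>\<^sup>+x. f (case_prod case_nat x) \<partial>(M0 \<Otimes>\<^sub>M PP))"
    by (intro nn_integral_distr mm) simp
  also have "\<dots> = (\<integral>\<^sup>+s. (\<integral>\<^sup>+\<omega>. f (case_nat s \<omega>) \<partial>PP) \<partial>M0)"
    by (subst sigma_finite_measure.nn_integral_fst[OF prob_space_imp_sigma_finite[OF prob_PP], symmetric]) (use mm in auto)
  finally show ?thesis .
qed



abbreviation Ex :: "real measure" where "Ex \<equiv> density lborel (exponential_density 1)"

lemma prob_Ex: "prob_space Ex" by (rule prob_space_exponential_density) simp

lemma int_fst:
  assumes h[measurable]: "h \<in> borel_measurable Unif"
  shows "(\<integral>\<^sup>+s. h (fst s) \<partial>M0) = (\<integral>\<^sup>+x. h x \<partial>Unif)"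
proof -
  interpret E: prob_space Ex by (rule prob_Ex)
  have "(\<integral>\<^sup>+s. h (fst s) \<partial>M0) = (\<integral>\<^sup>+x. \<integral>\<^sup>+y. h (fst (x, y)) \<partial>Ex \<partial>Unif)"
    unfolding M0_def
    by (subst sigma_finite_measure.nn_integral_fst[OF prob_space_imp_sigma_finite[OF prob_Ex]]) simp_all
  also have "\<dots> = (\<integral>\<^sup>+x. h x \<partial>Unif)"
  proof -
    have "emeasure Ex UNIV = 1" using E.emeasure_space_1 by simp
    then show ?thesis by simp
  qed
  finally show ?thesis .
qed

lemma int_Ex: "(\<integral>\<^sup>+y. ennreal (1 + y) \<partial>Ex) = 2"
proof -
  have "(\<integral>\<^sup>+y. ennreal (1 + y) \<partial>Ex) = (\<integral>\<^sup>+y. ennreal (exponential_density 1 y) * ennreal (1 + y) \<partial>lborel)"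
    by (subst nn_integral_density) auto
  also have "\<dots> = (\<integral>\<^sup>+y. ennreal (erlang_density 0 1 y * y ^ 0) + ennreal (erlang_density 0 1 y * y ^ 1) \<partial>lborel)"
  proof (intro nn_integral_cong)
    fix y :: real
    show "ennreal (exponential_density 1 y) * ennreal (1 + y) = ennreal (erlang_density 0 1 y * y ^ 0) + ennreal (erlang_density 0 1 y * y ^ 1)"
    proof (cases "y < 0")
      case True then show ?thesis by (simp add: exponential_density_def)
    next
      case False
      then show ?thesis
        by (simp add: ennreal_mult[symmetric] ennreal_plus[symmetric] distrib_left del: ennreal_plus)
    qed
  qed
  also have "\<dots> = (\<integral>\<^sup>+y. ennreal (erlang_density 0 1 y * y ^ 0) \<partial>lborel) + (\<integral>\<^sup>+y. ennreal (erlang_density 0 1 y * y ^ 1) \<partial>lborel)"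
    by (rule nn_integral_add) auto
  also have "\<dots> = 1 + 1"
    using nn_integral_erlang_ith_moment[of 1 0 0] nn_integral_erlang_ith_moment[of 1 0 1]
    by (simp only: fact_0 fact_1 add_0 power_one mult_1) simp
  also have "\<dots> = 2" by simp
  finally show ?thesis .
qed

lemma int_snd: "(\<integral>\<^sup>+s. ennreal (1 + snd s) \<partial>M0) = 2"
proof -
  interpret E: prob_space Ex by (rule prob_Ex)
  interpret U: prob_space Unif by (rule prob_unif)
  have "(\<integral>\<^sup>+s. ennreal (1 + snd s) \<partial>M0) = (\<integral>\<^sup>+x. \<integral>\<^sup>+y. ennreal (1 + snd (x, y)) \<partial>Ex \<partial>Unif)"
    unfolding M0_def
    by (subst sigma_finite_measure.nn_integral_fst[OF prob_space_imp_sigma_finite[OF prob_Ex]]) simp_all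
  also have "\<dots> = 2"
  proof -
    have "emeasure Unif UNIV = 1" using U.emeasure_space_1 by simp
    then show ?thesis by (simp add: int_Ex)
  qed
  finally show ?thesis .
qed



lemma meas_HS[measurable]: "(\<lambda>\<omega>. HS m z n \<omega>) \<in> borel_measurable PP"
  unfolding HS_def by measurable

lemma meas_jumpS[measurable]: "(\<lambda>U. ennreal (c * Ssum m (fb_jump m z U))) \<in> borel_measurable borel"
  unfolding Ssum_def fb_jump_def Let_def fb_rate_def by measurable

lemma base_bound:
  assumes m2: "2 \<le> m" and I: "Inv m z"
  shows "ennreal (16 * (real m - 2) * Ssum m z) \<le> ennreal (16 * (real m - 2)^2)"
proof (intro ennreal_leI)
  have "16 * (real m - 2) * Ssum m z \<le> 16 * (real m - 2) * (real m - 2)"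
    using Ssum_bounds[OF m2 I] m2 by (intro mult_left_mono) auto
  then show "16 * (real m - 2) * Ssum m z \<le> 16 * (real m - 2)^2" by (metis power2_eq_square mult.assoc)
qed

lemma HS_dead: "\<not> z (m - 1) < a0 \<Longrightarrow> HS m z n \<omega> = 0"
  unfolding HS_def hterm_def galive_def by auto

lemma Hbound:
  assumes m2: "2 \<le> m"
  shows "Inv m z \<Longrightarrow> (\<integral>\<^sup>+\<omega>. HS m z n \<omega> \<partial>PP) + ennreal (16 * (real m - 2) * Ssum m z) \<le> ennreal (16 * (real m - 2)^2)"
proof (induct n arbitrary: z)
  case 0
  then show ?case using base_bound[OF m2] by (simp add: HS_def)
next
  case (Suc n)
  note I = Suc.prems
  define K where "K = 16 * (real m - 2)"
  define C where "C = 16 * (real m - 2)^2"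
  show ?case
  proof (cases "z (m - 1) < a0")
    case False
    then show ?thesis using base_bound[OF m2 I] by (simp add: HS_dead)
  next
    case al: True
    have m3: "3 \<le> m"
    proof (rule ccontr)
      assume "\<not> 3 \<le> m"
      then have "m - 1 = 1" using m2 by simp
      then show False using al I a0_bounds by (simp add: Inv_def)
    qed
    have K0: "0 \<le> K" using m2 unfolding K_def by simp
    define F where "F U = (\<integral>\<^sup>+\<omega>. HS m (fb_jump m z U) n \<omega> \<partial>PP)" for U
    define G where "G \<omega> = (\<Sum>j<n. hterm m z \<omega> (Suc j))" for \<omega>
    have [measurable]: "G \<in> borel_measurable PP" unfolding G_def by measurable
    have FG: "F (fst s) = (\<integral>\<^sup>+\<omega>. G (case_nat s \<omega>) \<partial>PP)" for s
      unfolding F_def G_def HS_def hterm_Suc using al by simp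
    have measF[measurable]: "(\<lambda>s. F (fst s)) \<in> borel_measurable M0"
    proof -
      have mm: "(\<lambda>(s, \<omega>). case_nat s \<omega>) \<in> measurable (M0 \<Otimes>\<^sub>M PP) PP" by measurable
      have "(\<lambda>x. G (case_prod case_nat x)) \<in> borel_measurable (M0 \<Otimes>\<^sub>M PP)"
        by (rule measurable_compose[OF mm]) simp
      then have "case_prod (\<lambda>s \<omega>. G (case_nat s \<omega>)) \<in> borel_measurable (M0 \<Otimes>\<^sub>M PP)"
        by (simp add: case_prod_unfold)
      then show ?thesis unfolding FG
        by (rule sigma_finite_measure.borel_measurable_nn_integral[OF prob_space_imp_sigma_finite[OF prob_PP]])
    qed
    have PP1: "emeasure PP (space PP) = 1" using prob_space.emeasure_space_1[OF prob_PP] .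
    have "(\<integral>\<^sup>+\<omega>. HS m z (Suc n) \<omega> \<partial>PP) = (\<integral>\<^sup>+s. (\<integral>\<^sup>+\<omega>. HS m z (Suc n) (case_nat s \<omega>) \<partial>PP) \<partial>M0)"
      by (rule PP_iter) measurable
    also have "\<dots> = (\<integral>\<^sup>+s. ennreal (1 + snd s) + F (fst s) \<partial>M0)"
    proof (intro nn_integral_cong)
      fix s :: "real \<times> real"
      have "(\<integral>\<^sup>+\<omega>. HS m z (Suc n) (case_nat s \<omega>) \<partial>PP) = (\<integral>\<^sup>+\<omega>. ennreal (1 + snd s) + HS m (fb_jump m z (fst s)) n \<omega> \<partial>PP)"
        using al by (simp add: HS_rec)
      also have "\<dots> = ennreal (1 + snd s) + F (fst s)"
        unfolding F_def by (subst nn_integral_add) (auto simp: PP1)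
      finally show "(\<integral>\<^sup>+\<omega>. HS m z (Suc n) (case_nat s \<omega>) \<partial>PP) = ennreal (1 + snd s) + F (fst s)" .
    qed
    also have "\<dots> = 2 + (\<integral>\<^sup>+s. F (fst s) \<partial>M0)"
    proof -
      have ms: "(\<lambda>s. ennreal (1 + snd s)) \<in> borel_measurable M0" unfolding M0_def by measurable
      show ?thesis by (subst nn_integral_add[OF ms measF]) (simp add: int_snd)
    qed
    finally have eq1: "(\<integral>\<^sup>+\<omega>. HS m z (Suc n) \<omega> \<partial>PP) = 2 + (\<integral>\<^sup>+s. F (fst s) \<partial>M0)" .
    have Ij: "Inv m (fb_jump m z U)" for U using jump_Inv[OF I] .
    have IH: "F U + ennreal (K * Ssum m (fb_jump m z U)) \<le> ennreal C" for U
      using Suc.hyps[OF Ij[of U]] unfolding F_def K_def C_def .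
    have keyK: "ennreal (K * Ssum m z) + 2 \<le> (\<integral>\<^sup>+s. ennreal (K * Ssum m (fb_jump m z (fst s))) \<partial>M0)"
    proof -
      have "ennreal (K * Ssum m z) + 2 = ennreal K * ennreal (Ssum m z + 1 / (8 * (real m - 2)))"
      proof -
        have "K * (Ssum m z + 1 / (8 * (real m - 2))) = K * Ssum m z + 2"
          using m3 unfolding K_def by (simp add: field_simps)
        moreover have "0 \<le> K * Ssum m z" using K0 Ssum_bounds[OF m2 I] by simp
        moreover have "ennreal (K * Ssum m z + 2) = ennreal (K * Ssum m z) + ennreal 2"
          using \<open>0 \<le> K * Ssum m z\<close> by (intro ennreal_plus) auto
        ultimately show ?thesis using K0 Ssum_bounds[OF m2 I]
          by (simp add: ennreal_mult[symmetric] del: ennreal_plus)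
      qed
      also have "\<dots> \<le> ennreal K * (\<integral>\<^sup>+U. ennreal (Ssum m (fb_jump m z U)) \<partial>Unif)"
        by (intro mult_left_mono key[OF m2 I al]) simp
      also have "\<dots> = (\<integral>\<^sup>+U. ennreal (K * Ssum m (fb_jump m z U)) \<partial>Unif)"
      proof -
        have "(\<integral>\<^sup>+U. ennreal (K * Ssum m (fb_jump m z U)) \<partial>Unif) = (\<integral>\<^sup>+U. ennreal K * ennreal (Ssum m (fb_jump m z U)) \<partial>Unif)"
          using K0 Ssum_bounds[OF m2 Ij] by (intro nn_integral_cong) (simp add: ennreal_mult)
        also have "\<dots> = ennreal K * (\<integral>\<^sup>+U. ennreal (Ssum m (fb_jump m z U)) \<partial>Unif)"
          using meas_jumpS[of 1 m z] by (intro nn_integral_cmult) simp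
        finally show ?thesis by simp
      qed
      also have "\<dots> = (\<integral>\<^sup>+s. ennreal (K * Ssum m (fb_jump m z (fst s))) \<partial>M0)"
        by (rule int_fst[symmetric]) simp
      finally show ?thesis .
    qed
    have "(\<integral>\<^sup>+\<omega>. HS m z (Suc n) \<omega> \<partial>PP) + ennreal (K * Ssum m z)
        = (\<integral>\<^sup>+s. F (fst s) \<partial>M0) + (ennreal (K * Ssum m z) + 2)"
      unfolding eq1 by (simp add: ac_simps)
    also have "\<dots> \<le> (\<integral>\<^sup>+s. F (fst s) \<partial>M0) + (\<integral>\<^sup>+s. ennreal (K * Ssum m (fb_jump m z (fst s))) \<partial>M0)"
      by (intro add_left_mono keyK)
    also have "\<dots> = (\<integral>\<^sup>+s. F (fst s) + ennreal (K * Ssum m (fb_jump m z (fst s))) \<partial>M0)"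
    proof -
      have ms: "(\<lambda>s. ennreal (K * Ssum m (fb_jump m z (fst s)))) \<in> borel_measurable M0" unfolding M0_def by measurable
      show ?thesis by (subst nn_integral_add[OF measF ms]) simp
    qed
    also have "\<dots> \<le> (\<integral>\<^sup>+s. ennreal C \<partial>M0)"
      by (intro nn_integral_mono IH)
    also have "\<dots> = ennreal C"
      using prob_space.emeasure_space_1[OF prob_M0] by simp
    finally show ?thesis unfolding K_def C_def .
  qed
qed



definition Hinf :: "nat \<Rightarrow> (nat \<Rightarrow> real \<times> real) \<Rightarrow> ennreal" where
  "Hinf m \<omega> = (\<Sum>j. hterm m (fb_init m) \<omega> j)"

lemma Inv_init: "2 \<le> m \<Longrightarrow> Inv m (fb_init m)"
  by (auto simp: Inv_def fb_init_def)

lemma chain_Inv: "2 \<le> m \<Longrightarrow> Inv m (fb_chain m \<omega> k)"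
  by (induct k) (auto simp: Inv_init jump_Inv)

lemma chain_rate: "2 \<le> m \<Longrightarrow> fb_rate m (fb_chain m \<omega> k) = 1 - fb_chain m \<omega> k (m - 1)"
  using rate_tele[of m "fb_chain m \<omega> k"] chain_Inv[of m \<omega> k] by (simp add: Inv_def)

lemma jumptime_mono: "k \<le> k' \<Longrightarrow> fb_jumptime m \<omega> k \<le> fb_jumptime m \<omega> k'"
  unfolding fb_jumptime_def by (intro sum_mono2) auto

lemma pathwise:
  assumes m2: "2 \<le> m" and pos: "\<forall>j. 0 < snd (\<omega> j)" and fin: "Hinf m \<omega> \<noteq> \<infinity>"
  shows "fb_beta m \<omega> \<le> 2 * Hinf m \<omega> + 1"
proof -
  let ?c = "fb_chain m \<omega>"
  let ?al = "galive m (fb_init m) \<omega>"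
  have al_iff: "?al j \<longleftrightarrow> (\<forall>i\<le>j. ?c i (m - 1) < a0)" for j
    by (simp add: galive_def fb_chain_gchain)
  have sl: "(\<Sum>j<n. hterm m (fb_init m) \<omega> j) \<le> Hinf m \<omega>" for n
    unfolding Hinf_def by (intro sum_le_suminf summableI) auto
  have ex: "\<exists>j. \<not> ?al j"
  proof (rule ccontr)
    assume "\<not> (\<exists>j. \<not> ?al j)"
    then have all: "?al j" for j by blast
    have "of_nat n \<le> Hinf m \<omega>" for n
    proof -
      have "(\<Sum>j<n. (1::ennreal)) \<le> (\<Sum>j<n. hterm m (fb_init m) \<omega> j)"
      proof (intro sum_mono)
        fix j
        have "ennreal 1 \<le> ennreal (1 + snd (\<omega> j))" using pos[rule_format, of j] by (intro ennreal_leI) simp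
        then show "1 \<le> hterm m (fb_init m) \<omega> j" using all[of j] by (simp add: hterm_def)
      qed
      then show ?thesis using sl[of n] by simp
    qed
    moreover obtain r where r: "Hinf m \<omega> = ennreal r" "0 \<le> r" using fin
      by (cases "Hinf m \<omega>") auto
    moreover obtain n :: nat where "r < real n" using reals_Archimedean2 by blast
    ultimately have "ennreal (real n) \<le> ennreal r" by (metis ennreal_of_nat_eq_real_of_nat)
    then show False using \<open>r < real n\<close> r(2) by (simp add: ennreal_le_iff)
  qed
  define N where "N = (LEAST j. \<not> ?al j)"
  have N1: "\<not> ?al N" unfolding N_def using LeastI_ex[OF ex] .
  have N2: "?al j" if "j < N" for j using not_less_Least[of j "\<lambda>j. \<not> ?al j"] that unfolding N_def by blast
  have cj: "?c j (m - 1) < a0" if "j < N" for j using N2[OF that] al_iff by blast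
  have cN: "a0 \<le> ?c N (m - 1)"
  proof -
    obtain i where i: "i \<le> N" "\<not> ?c i (m - 1) < a0" using N1 al_iff by blast
    then have "i = N" using cj by (metis le_neq_implies_less)
    then show ?thesis using i by simp
  qed
  have hold_j: "fb_hold m \<omega> j \<le> 2 * hterm m (fb_init m) \<omega> j \<and> fb_hold m \<omega> j < \<infinity>" if jN: "j < N" for j
  proof -
    define r where "r = fb_rate m (?c j)"
    have r: "r = 1 - ?c j (m - 1)" unfolding r_def using chain_rate[OF m2] .
    have r2: "1/2 < r" using cj[OF jN] a0_bounds r by simp
    have h: "fb_hold m \<omega> j = ennreal (snd (\<omega> j) / r)" using r2 unfolding fb_hold_def r_def Let_def by simp
    have "snd (\<omega> j) / r \<le> 2 * (1 + snd (\<omega> j))"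
    proof -
      have "snd (\<omega> j) / r \<le> snd (\<omega> j) / (1/2)" using pos r2
        by (intro divide_left_mono) (auto intro: less_imp_le)
      then show ?thesis using pos by simp
    qed
    then have "ennreal (snd (\<omega> j) / r) \<le> ennreal (2 * (1 + snd (\<omega> j)))" by (rule ennreal_leI)
    also have "\<dots> = 2 * ennreal (1 + snd (\<omega> j))" using pos[rule_format, of j]
      by (subst ennreal_mult) auto
    finally show ?thesis using N2[OF jN] h by (simp add: hterm_def)
  qed
  define J where "J = fb_jumptime m \<omega> N"
  have J_le: "J \<le> 2 * Hinf m \<omega>"
  proof -
    have "J \<le> (\<Sum>j<N. 2 * hterm m (fb_init m) \<omega> j)"
      unfolding J_def fb_jumptime_def using hold_j by (intro sum_mono) auto
    also have "\<dots> = 2 * (\<Sum>j<N. hterm m (fb_init m) \<omega> j)" by (simp add: sum_distrib_left)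
    also have "\<dots> \<le> 2 * Hinf m \<omega>" by (intro mult_left_mono sl) auto
    finally show ?thesis .
  qed
  have J_fin: "J < \<infinity>" unfolding J_def fb_jumptime_def using hold_j by (simp add: ennreal_sum_less_top)
  define h where "h = fb_hold m \<omega> N"
  have h0: "0 < h"
  proof (cases "0 < fb_rate m (?c N)")
    case True
    then have "0 < snd (\<omega> N) / fb_rate m (?c N)" using pos by simp
    then show ?thesis using True unfolding h_def fb_hold_def Let_def by simp
  next
    case False
    then show ?thesis unfolding h_def fb_hold_def Let_def by simp
  qed
  define \<delta> where "\<delta> = (if h = \<infinity> then 1 else min 1 (enn2real h / 2))"
  have d: "0 < \<delta>" "\<delta> \<le> 1" "ennreal \<delta> < h"
  proof -
    show "\<delta> \<le> 1" unfolding \<delta>_def by auto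
    show "0 < \<delta>"
    proof (cases "h = \<infinity>")
      case False
      then have "0 < enn2real h" using h0 by (simp add: enn2real_positive_iff less_top)
      then show "0 < \<delta>" unfolding \<delta>_def using False by auto
    qed (auto simp: \<delta>_def)
    show "ennreal \<delta> < h"
    proof (cases "h = \<infinity>")
      case False
      then have hp: "0 < enn2real h" using h0 by (simp add: enn2real_positive_iff less_top)
      have "\<delta> < enn2real h" unfolding \<delta>_def using False hp by auto
      then have "ennreal \<delta> < ennreal (enn2real h)" using \<open>0 < \<delta>\<close> by (simp add: ennreal_lessI)
      then show ?thesis using False by (simp add: less_top)
    qed (auto simp: \<delta>_def)
  qed
  define t where "t = enn2real J + \<delta>"
  have tpos: "0 < t" unfolding t_def using d(1) enn2real_nonneg[of J] by linarith
  have et: "ennreal t = J + ennreal \<delta>"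
    unfolding t_def using d(1) J_fin by (subst ennreal_plus) auto
  have Sset: "{k. 1 \<le> k \<and> fb_jumptime m \<omega> k \<le> ennreal t} = {1..N}"
  proof (intro set_eqI iffI)
    fix k assume "k \<in> {1..N}"
    then have "fb_jumptime m \<omega> k \<le> J" unfolding J_def by (intro jumptime_mono) auto
    also have "J \<le> ennreal t" unfolding et by simp
    finally show "k \<in> {k. 1 \<le> k \<and> fb_jumptime m \<omega> k \<le> ennreal t}" using \<open>k \<in> {1..N}\<close> by simp
  next
    fix k assume k: "k \<in> {k. 1 \<le> k \<and> fb_jumptime m \<omega> k \<le> ennreal t}"
    show "k \<in> {1..N}"
    proof (rule ccontr)
      assume "k \<notin> {1..N}"
      then have "Suc N \<le> k" using k by auto
      then have "fb_jumptime m \<omega> (Suc N) \<le> fb_jumptime m \<omega> k" by (rule jumptime_mono)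
      moreover have "fb_jumptime m \<omega> (Suc N) = J + h" unfolding J_def h_def fb_jumptime_def by simp
      moreover have "J + ennreal \<delta> < J + h" using d(3) J_fin by (simp add: ennreal_add_left_cancel_less)
      ultimately have "ennreal t < fb_jumptime m \<omega> k" unfolding et by (metis less_le_trans)
      moreover have "fb_jumptime m \<omega> k \<le> ennreal t" using k by blast
      ultimately show False using leD by blast
    qed
  qed
  have Zt: "fb_Z m \<omega> t = ?c N" unfolding fb_Z_def Sset by simp
  have "ennreal t \<in> {ennreal t | t. 0 < t \<and> 1 / (2 * exp 1) \<le> fb_Z m \<omega> t (m - 1)}"
    using tpos Zt cN unfolding a0_def by (intro CollectI exI[where x=t]) simp
  then have "fb_beta m \<omega> \<le> ennreal t" unfolding fb_beta_def by (rule Inf_lower)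
  also have "\<dots> = J + ennreal \<delta>" by (rule et)
  also have "\<dots> \<le> 2 * Hinf m \<omega> + 1" using J_le d(2) by (intro add_mono) auto
  finally show ?thesis .
qed



lemma meas_Hinf[measurable]: "(\<lambda>\<omega>. Hinf m \<omega>) \<in> borel_measurable PP"
  unfolding Hinf_def by measurable

lemma int_Hinf:
  assumes m2: "2 \<le> m"
  shows "(\<integral>\<^sup>+\<omega>. Hinf m \<omega> \<partial>PP) \<le> ennreal (16 * (real m - 2)^2)"
proof -
  have "(\<integral>\<^sup>+\<omega>. Hinf m \<omega> \<partial>PP) = (\<Sum>j. (\<integral>\<^sup>+\<omega>. hterm m (fb_init m) \<omega> j \<partial>PP))"
    unfolding Hinf_def by (rule nn_integral_suminf) measurable
  also have "\<dots> = (SUP n. (\<Sum>j<n. (\<integral>\<^sup>+\<omega>. hterm m (fb_init m) \<omega> j \<partial>PP)))"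
    by (rule suminf_eq_SUP)
  also have "\<dots> \<le> ennreal (16 * (real m - 2)^2)"
  proof (intro SUP_least)
    fix n
    have "(\<Sum>j<n. (\<integral>\<^sup>+\<omega>. hterm m (fb_init m) \<omega> j \<partial>PP)) = (\<integral>\<^sup>+\<omega>. HS m (fb_init m) n \<omega> \<partial>PP)"
      unfolding HS_def by (rule nn_integral_sum[symmetric]) measurable
    also have "\<dots> \<le> (\<integral>\<^sup>+\<omega>. HS m (fb_init m) n \<omega> \<partial>PP) + ennreal (16 * (real m - 2) * Ssum m (fb_init m))"
      by simp
    also have "\<dots> \<le> ennreal (16 * (real m - 2)^2)"
      by (rule Hbound[OF m2 Inv_init[OF m2]])
    finally show "(\<Sum>j<n. (\<integral>\<^sup>+\<omega>. hterm m (fb_init m) \<omega> j \<partial>PP)) \<le> ennreal (16 * (real m - 2)^2)" .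
  qed
  finally show ?thesis .
qed

lemma AE_M0_pos: "AE s in M0. 0 < snd s"
proof -
  interpret E: prob_space Ex by (rule prob_Ex)
  interpret U: prob_space Unif by (rule prob_unif)
  have "emeasure Ex {..0} = 0"
    using emeasure_erlang_density[of 1 0 0] by (simp add: erlang_CDF_at0)
  then have "{..0} \<in> null_sets Ex" by (auto simp: null_sets_def)
  then have "space Unif \<times> {..0} \<in> null_sets M0" unfolding M0_def
    by (intro sigma_finite_measure.times_in_null_sets2[OF prob_space_imp_sigma_finite[OF prob_Ex]]) auto
  moreover have "{s \<in> space M0. \<not> 0 < snd s} \<subseteq> space Unif \<times> {..0}"
    unfolding M0_def by (auto simp: space_pair_measure)
  ultimately show ?thesis by (rule AE_I')
qed

lemma AE_pos: "AE \<omega> in PP. \<forall>j. 0 < snd (\<omega> j)"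
proof -
  interpret M0: prob_space M0 by (rule prob_M0)
  interpret Q: sequence_space M0 by unfold_locales
  show ?thesis
    by (subst AE_all_countable) (auto intro!: Q.AE_component AE_M0_pos)
qed



theorem lemma6p1:
  shows "\<exists>c::real. 0 < c \<and> (\<forall>m::nat. 1 < m \<longrightarrow>
           (\<integral>\<^sup>+ \<omega>. fb_beta m \<omega> \<partial>fb_space) \<le> ennreal (c * real m ^ 2))"
proof (intro exI[where x=33] conjI allI impI)
  fix m :: nat assume "1 < m"
  then have m2: "2 \<le> m" by simp
  define C where "C = 16 * (real m - 2)^2"
  have IH: "(\<integral>\<^sup>+\<omega>. Hinf m \<omega> \<partial>PP) \<le> ennreal C" unfolding C_def by (rule int_Hinf[OF m2])
  then have "(\<integral>\<^sup>+\<omega>. Hinf m \<omega> \<partial>PP) \<noteq> \<infinity>" by (auto simp: top_unique)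
  then have AEf: "AE \<omega> in PP. Hinf m \<omega> \<noteq> \<infinity>" by (intro nn_integral_PInf_AE) auto
  have "(\<integral>\<^sup>+ \<omega>. fb_beta m \<omega> \<partial>fb_space) = (\<integral>\<^sup>+ \<omega>. fb_beta m \<omega> \<partial>PP)" by (simp add: fb_space_M0)
  also have "\<dots> \<le> (\<integral>\<^sup>+ \<omega>. 2 * Hinf m \<omega> + 1 \<partial>PP)"
  proof (intro nn_integral_mono_AE)
    show "AE \<omega> in PP. fb_beta m \<omega> \<le> 2 * Hinf m \<omega> + 1"
      using AEf AE_pos by eventually_elim (rule pathwise[OF m2])
  qed
  also have "\<dots> = 2 * (\<integral>\<^sup>+ \<omega>. Hinf m \<omega> \<partial>PP) + 1"
    using prob_space.emeasure_space_1[OF prob_PP]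
    by (subst nn_integral_add) (auto simp: nn_integral_cmult)
  also have "\<dots> \<le> 2 * ennreal C + 1"
    by (intro add_right_mono mult_left_mono IH) auto
  also have "\<dots> = ennreal (2 * C + 1)"
    unfolding C_def by (simp add: ennreal_plus ennreal_mult)
  also have "\<dots> \<le> ennreal (33 * real m ^ 2)"
  proof (intro ennreal_leI)
    have "(real m - 2)^2 \<le> real m ^ 2" using m2 by (intro power_mono) auto
    moreover have "1 \<le> real m ^ 2" using m2 by simp
    ultimately show "2 * C + 1 \<le> 33 * real m ^ 2" unfolding C_def by linarith
  qed
  finally show "(\<integral>\<^sup>+ \<omega>. fb_beta m \<omega> \<partial>fb_space) \<le> ennreal (33 * real m ^ 2)" .
qed simp

end
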